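(* Let $C_n>0$ and suppose the optimal dual variable satisfies $\lambda\le\kappa\, n^{1/3}/C_n^{1/3}$ for some constant $\kappa>0$. Then, with $x_t$ the predictions of FLH-OGD, $$\sum_{t=1}^n (y_t-x_t)^2-(y_t-u_t)^2\le c\,\log n\,\max\{n^{1/3}C_n^{2/3},1\},$$ where $c>0$ depends only on $B,G,\kappa$.
   Context: Squared loss game: $n\ge 3$, $B\ge 1$, $G\ge B$; for $t=1,\dots,n$ the learner predicts $x_t\in[-B,B]$, then the adversary reveals $y_t\in[-G,G]$. $[a,b]=\{a,\dots,b\}$. FLH-OGD: For each $j\in[n]$ a base learner $E^j$ is started at time $j$; it runs projected online gradient descent on $[-B,B]$ on the losses $x\mapsto (y_t-x)^2$, $t\ge j$: its first prediction $x^{(j)}_j$ is a fixed point of $[-B,B]$, and $x^{(j)}_{t+1}=\Pi\big(x^{(j)}_t-\tfrac{1}{2\tau}\cdot 2(x^{(j)}_t-y_t)\big)$ with $\tau=t-j+1$, $\Pi$ the projection onto $[-B,B]$. The FLH meta-algorithm with learning rate $\zeta$ keeps a probability vector $v_t=(v_t^{(1)},\dots,v_t^{(t)})$, $v_1=(1)$; it predicts $x_t=\sum_{j\le t}v_t^{(j)}x^{(j)}_t$; after $y_t$ is revealed it sets $\hat v^{(i)}_{t+1}=v_t^{(i)}e^{-\zeta(y_t-x_t^{(i)})^2}/\sum_{j\le t}v_t^{(j)}e^{-\zeta(y_t-x_t^{(j)})^2}$ for $i\le t$, then $v^{(t+1)}_{t+1}=1/(t+1)$ and $v^{(i)}_{t+1}=(1-\tfrac1{t+1})\hat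 v^{(i)}_{t+1}$. FLH-OGD uses $\zeta=1/(2(G+B)^2)$. Offline optimal: $u_1,\dots,u_n$ is an optimal solution of: minimize $\frac12\sum_{t=1}^n(y_t-\tilde u_t)^2$ subject to $\sum_{t=2}^{n}|\tilde u_t-\tilde u_{t-1}|\le C_n$ and $-B\le\tilde u_t\le B$; $\lambda\ge0$ is an optimal dual variable for the total variation constraint (with $\gamma^\pm_t\ge 0$ those of the box constraints), satisfying the KKT conditions: there are $s_t\in[-1,1]$ with $s_t=\mathrm{sign}(u_{t+1}-u_t)$ whenever $u_{t+1}\ne u_t$, $s_0=s_n=0$, $u_t-y_t=\lambda(s_t-s_{t-1})+\gamma_t^--\gamma_t^+$, $\lambda(\sum_{t=2}^n|u_t-u_{t-1}|-C_n)=0$, $\gamma_t^-(u_t+B)=0$, $\gamma_t^+(u_t-B)=0$. *)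

theory Defs
  imports Complex_Main
begin

definition proj :: "real \<Rightarrow> real \<Rightarrow> real" where
  "proj B x = max (- B) (min B x)"

text \<open>Base learner E^j (projected OGD started at time j with initial point x0):
  ogd B x0 y j k is its prediction at time j + k.  At time t = j + k we have
  tau = k + 1, and the step x - (1/(2 tau)) * 2 (x - y_t) = x - (x - y_t)/tau.\<close>
primrec ogd :: "real \<Rightarrow> real \<Rightarrow> (nat \<Rightarrow> real) \<Rightarrow> nat \<Rightarrow> nat \<Rightarrow> real" where
  "ogd B x0 y j 0 = x0"
| "ogd B x0 y j (Suc k) =
     proj B (ogd B x0 y j k - (ogd B x0 y j k - y (j + k)) / real (Suc k))"

text \<open>Prediction of base learner E^j at time t (meaningful for t >= j);
  init j is its (fixed) first prediction.\<close>
definition base_pred :: "real \<Rightarrow> (nat \<Rightarrow> real) \<Rightarrow> (nat \<Rightarrow> real) \<Rightarrow> nat \<Rightarrow> nat \<Rightarrow> real" where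
  "base_pred B init y j t = ogd B (init j) y j (t - j)"

text \<open>FLH weights: flh_w zeta y xb t i = v_t^(i) (for t >= 1, 1 <= i <= t),
  where xb j t is the prediction of base learner j at time t.\<close>
primrec flh_w :: "real \<Rightarrow> (nat \<Rightarrow> real) \<Rightarrow> (nat \<Rightarrow> nat \<Rightarrow> real) \<Rightarrow> nat \<Rightarrow> nat \<Rightarrow> real" where
  "flh_w \<zeta> y xb 0 = (\<lambda>i. 0)"
| "flh_w \<zeta> y xb (Suc t) =
     (if t = 0 then (\<lambda>i. if i = 1 then 1 else 0)
      else (\<lambda>i.
        let Z = (\<Sum>j = 1..t. flh_w \<zeta> y xb t j * exp (- \<zeta> * (y t - xb j t)\<^sup>2))
        in if i = Suc t then 1 / real (Suc t)
           else if 1 \<le> i \<and> i \<le> t then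
             (1 - 1 / real (Suc t)) * (flh_w \<zeta> y xb t i * exp (- \<zeta> * (y t - xb i t)\<^sup>2) / Z)
           else 0))"

definition flh_ogd :: "real \<Rightarrow> real \<Rightarrow> (nat \<Rightarrow> real) \<Rightarrow> (nat \<Rightarrow> real) \<Rightarrow> nat \<Rightarrow> real" where
  "flh_ogd B G init y t =
     (let \<zeta> = 1 / (2 * (G + B)\<^sup>2);
          xb = base_pred B init y
      in \<Sum>j = 1..t. flh_w \<zeta> y xb t j * xb j t)"

definition tv :: "nat \<Rightarrow> (nat \<Rightarrow> real) \<Rightarrow> real" where
  "tv n u = (\<Sum>t = 2..n. \<bar>u t - u (t - 1)\<bar>)"

definition sq_obj :: "nat \<Rightarrow> (nat \<Rightarrow> real) \<Rightarrow> (nat \<Rightarrow> real) \<Rightarrow> real" where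
  "sq_obj n y u = (1/2) * (\<Sum>t = 1..n. (y t - u t)\<^sup>2)"

definition feasible :: "nat \<Rightarrow> real \<Rightarrow> real \<Rightarrow> (nat \<Rightarrow> real) \<Rightarrow> bool" where
  "feasible n B C u \<longleftrightarrow> tv n u \<le> C \<and> (\<forall>t \<in> {1..n}. - B \<le> u t \<and> u t \<le> B)"

definition offline_opt :: "nat \<Rightarrow> real \<Rightarrow> real \<Rightarrow> (nat \<Rightarrow> real) \<Rightarrow> (nat \<Rightarrow> real) \<Rightarrow> bool" where
  "offline_opt n B C y u \<longleftrightarrow> feasible n B C u \<and>
     (\<forall>w. feasible n B C w \<longrightarrow> sq_obj n y u \<le> sq_obj n y w)"

text \<open>KKT conditions with dual variables lam (TV constraint), gm/gp (box constraints),
  and subgradient signs s_0..s_n.\<close>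
definition kkt :: "nat \<Rightarrow> real \<Rightarrow> real \<Rightarrow> (nat \<Rightarrow> real) \<Rightarrow> (nat \<Rightarrow> real) \<Rightarrow> real
    \<Rightarrow> (nat \<Rightarrow> real) \<Rightarrow> (nat \<Rightarrow> real) \<Rightarrow> (nat \<Rightarrow> real) \<Rightarrow> bool" where
  "kkt n B C y u lam s gm gp \<longleftrightarrow>
     lam \<ge> 0 \<and>
     (\<forall>t \<in> {0..n}. - 1 \<le> s t \<and> s t \<le> 1) \<and> s 0 = 0 \<and> s n = 0 \<and>
     (\<forall>t \<in> {1..<n}. u (t + 1) \<noteq> u t \<longrightarrow> s t = sgn (u (t + 1) - u t)) \<and>
     (\<forall>t \<in> {1..n}. u t - y t = lam * (s t - s (t - 1)) + gm t - gp t \<and>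
        gm t \<ge> 0 \<and> gp t \<ge> 0 \<and> gm t * (u t + B) = 0 \<and> gp t * (u t - B) = 0) \<and>
     lam * (tv n u - C) = 0"

end

theory Submission
  imports Defs "HOL-Analysis.Analysis"
begin


lemma proj_range: "B \<ge> 0 \<Longrightarrow> - B \<le> proj B x \<and> proj B x \<le> B"
  by (auto simp: proj_def)

lemma proj_contract: "- B \<le> w \<Longrightarrow> w \<le> B \<Longrightarrow> \<bar>proj B x - w\<bar> \<le> \<bar>x - w\<bar>"
  by (auto simp: proj_def)

lemma ogd_range: "B \<ge> 0 \<Longrightarrow> - B \<le> x0 \<Longrightarrow> x0 \<le> B \<Longrightarrow>
   - B \<le> ogd B x0 y j k \<and> ogd B x0 y j k \<le> B"
  by (cases k) (auto simp: proj_range)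

lemma ogd_step:
  fixes z y w B G :: real and m :: nat
  assumes B: "- B \<le> w" "w \<le> B" and z: "\<bar>z\<bar> \<le> B" and y: "\<bar>y\<bar> \<le> G"
  shows "(y - z)\<^sup>2 - (y - w)\<^sup>2 \<le> real m * (z - w)\<^sup>2
     - real (Suc m) * (proj B (z - (z - y) / real (Suc m)) - w)\<^sup>2 + (G + B)\<^sup>2 / real (Suc m)"
proof -
  define \<tau> where "\<tau> = real (Suc m)"
  have tp: "\<tau> > 0" by (simp add: \<tau>_def)
  define z' where "z' = proj B (z - (z - y) / \<tau>)"
  have "\<bar>z' - w\<bar> \<le> \<bar>z - (z - y) / \<tau> - w\<bar>" unfolding z'_def by (rule proj_contract[OF B])
  hence "(z' - w)\<^sup>2 \<le> (z - (z - y) / \<tau> - w)\<^sup>2"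
    by (metis abs_ge_zero power2_abs power_mono)
  hence "\<tau> * (z' - w)\<^sup>2 \<le> \<tau> * (z - (z - y) / \<tau> - w)\<^sup>2"
    using tp by (simp add: mult_left_mono)
  also have "\<tau> * (z - (z - y) / \<tau> - w)\<^sup>2 = \<tau> * (z - w)\<^sup>2 - 2 * (z - y) * (z - w) + (z - y)\<^sup>2 / \<tau>"
    using tp by (simp add: power2_eq_square field_simps)
  finally have h: "\<tau> * (z' - w)\<^sup>2 \<le> \<tau> * (z - w)\<^sup>2 - 2 * (z - y) * (z - w) + (z - y)\<^sup>2 / \<tau>" .
  have zy: "(z - y)\<^sup>2 \<le> (G + B)\<^sup>2"
  proof -
    have "\<bar>z - y\<bar> \<le> G + B" using z y by linarith
    thus ?thesis by (metis abs_ge_zero power2_abs power_mono)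
  qed
  have "(z - y)\<^sup>2 / \<tau> \<le> (G + B)\<^sup>2 / \<tau>" using zy tp by (simp add: divide_right_mono)
  moreover have "(y - z)\<^sup>2 - (y - w)\<^sup>2 = 2 * (z - y) * (z - w) - (z - w)\<^sup>2"
    by (simp add: power2_eq_square algebra_simps)
  moreover have "\<tau> = real m + 1" by (simp add: \<tau>_def)
  ultimately show ?thesis using h unfolding z'_def \<tau>_def[symmetric]
    by (simp add: algebra_simps)
qed

lemma ogd_regret:
  fixes B G w x0 :: real and y :: "nat \<Rightarrow> real"
  assumes B: "B \<ge> 0" "- B \<le> w" "w \<le> B" "- B \<le> x0" "x0 \<le> B"
    and y: "\<forall>k<m. \<bar>y (j + k)\<bar> \<le> G"
  shows "(\<Sum>k<m. (y (j + k) - ogd B x0 y j k)\<^sup>2 - (y (j + k) - w)\<^sup>2)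
     \<le> (G + B)\<^sup>2 * (\<Sum>k<m. 1 / real (Suc k)) - real m * (ogd B x0 y j m - w)\<^sup>2"
  using y
proof (induction m)
  case 0 then show ?case by simp
next
  case (Suc m)
  have z: "\<bar>ogd B x0 y j m\<bar> \<le> B" using ogd_range[OF B(1,4,5), of y j m] by (simp add: abs_le_iff)
  have yy: "\<bar>y (j + m)\<bar> \<le> G" using Suc.prems by simp
  have st: "(y (j + m) - ogd B x0 y j m)\<^sup>2 - (y (j + m) - w)\<^sup>2 \<le> real m * (ogd B x0 y j m - w)\<^sup>2
     - real (Suc m) * (ogd B x0 y j (Suc m) - w)\<^sup>2 + (G + B)\<^sup>2 / real (Suc m)"
    using ogd_step[OF B(2,3) z yy, of m] by simp
  have ih: "(\<Sum>k<m. (y (j + k) - ogd B x0 y j k)\<^sup>2 - (y (j + k) - w)\<^sup>2)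
     \<le> (G + B)\<^sup>2 * (\<Sum>k<m. 1 / real (Suc k)) - real m * (ogd B x0 y j m - w)\<^sup>2"
    using Suc by simp
  show ?case using ih st by (simp add: algebra_simps)
qed

lemma harm_ln: "(\<Sum>k<m. 1 / real (Suc k)) \<le> 1 + ln (real m)"
proof (induction m)
  case 0 then show ?case by simp
next
  case (Suc m)
  show ?case
  proof (cases "m = 0")
    case True then show ?thesis by simp
  next
    case False
    hence mp: "real m > 0" by simp
    have "ln (real m / real (Suc m)) \<le> real m / real (Suc m) - 1"
      using mp by (intro ln_le_minus_one) simp
    also have "\<dots> = - 1 / real (Suc m)" by (simp add: field_simps)
    finally have "1 / real (Suc m) \<le> ln (real (Suc m)) - ln (real m)"
      using mp by (simp add: ln_div)
    thus ?thesis using Suc.IH by simp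
  qed
qed

lemma sum_shift_interval: "a \<le> b \<Longrightarrow> sum f {a..b} = (\<Sum>k<Suc (b - a). f (a + k))"
  by (rule sum.reindex_bij_witness[of _ "\<lambda>k. a + k" "\<lambda>t. t - a"]) auto

lemma ogd_interval:
  fixes B G w :: real and y init :: "nat \<Rightarrow> real"
  assumes B: "B \<ge> 0" "- B \<le> w" "w \<le> B" "- B \<le> init a" "init a \<le> B"
    and ab: "a \<le> b" and y: "\<forall>t\<in>{a..b}. \<bar>y t\<bar> \<le> G"
  shows "(\<Sum>t=a..b. (y t - base_pred B init y a t)\<^sup>2 - (y t - w)\<^sup>2)
     \<le> (G + B)\<^sup>2 * (1 + ln (real (Suc (b - a))))"
proof -
  have y': "\<forall>k<Suc (b - a). \<bar>y (a + k)\<bar> \<le> G" using y ab by auto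
  have "(\<Sum>t=a..b. (y t - base_pred B init y a t)\<^sup>2 - (y t - w)\<^sup>2)
      = (\<Sum>k<Suc (b - a). (y (a + k) - ogd B (init a) y a k)\<^sup>2 - (y (a + k) - w)\<^sup>2)"
    using ab by (simp add: sum_shift_interval base_pred_def)
  also have "\<dots> \<le> (G + B)\<^sup>2 * (\<Sum>k<Suc (b - a). 1 / real (Suc k))
      - real (Suc (b - a)) * (ogd B (init a) y a (Suc (b - a)) - w)\<^sup>2"
    by (rule ogd_regret[OF B y'])
  also have "\<dots> \<le> (G + B)\<^sup>2 * (\<Sum>k<Suc (b - a). 1 / real (Suc k))" by simp
  also have "\<dots> \<le> (G + B)\<^sup>2 * (1 + ln (real (Suc (b - a))))"
    by (intro mult_left_mono harm_ln) simp
  finally show ?thesis .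
qed



lemma exp_concave:
  fixes G B y \<zeta> :: real and p xs :: "nat \<Rightarrow> real"
  assumes GB: "G + B > 0" and z: "\<zeta> = 1 / (2 * (G + B)\<^sup>2)" and y: "\<bar>y\<bar> \<le> G"
    and S: "finite S" "S \<noteq> {}" and p: "sum p S = 1" "\<forall>i\<in>S. p i \<ge> 0"
    and xs: "\<forall>i\<in>S. - B \<le> xs i \<and> xs i \<le> B"
  shows "(\<Sum>i\<in>S. p i * exp (- \<zeta> * (y - xs i)\<^sup>2)) \<le> exp (- \<zeta> * (y - (\<Sum>i\<in>S. p i * xs i))\<^sup>2)"
proof -
  define f where "f x = - exp (- \<zeta> * (y - x)\<^sup>2)" for x
  define f' where "f' x = - exp (- \<zeta> * (y - x)\<^sup>2) * (2 * \<zeta> * (y - x))" for x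
  define f'' where "f'' x = 2 * \<zeta> * exp (- \<zeta> * (y - x)\<^sup>2) * (1 - 2 * \<zeta> * (y - x)\<^sup>2)" for x
  have d1: "DERIV f x :> f' x" for x
    unfolding f_def f'_def
    by (auto intro!: derivative_eq_intros simp: algebra_simps)
  have d2: "DERIV f' x :> f'' x" for x
    unfolding f'_def f''_def
    by (auto intro!: derivative_eq_intros simp: algebra_simps power2_eq_square)
  have zp: "\<zeta> > 0" using GB z by simp
  have nn: "f'' x \<ge> 0" if "x \<in> {-B..B}" for x
  proof -
    have "\<bar>y - x\<bar> \<le> G + B" using that y by auto
    hence "(y - x)\<^sup>2 \<le> (G + B)\<^sup>2" by (metis abs_ge_zero power2_abs power_mono)
    hence "2 * \<zeta> * (y - x)\<^sup>2 \<le> 2 * \<zeta> * (G + B)\<^sup>2" using zp by simp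
    also have "\<dots> = 1" using z GB by simp
    finally have "2 * \<zeta> * (y - x)\<^sup>2 \<le> 1" .
    thus ?thesis unfolding f''_def using zp by simp
  qed
  have cv: "convex_on {-B..B} f"
    by (rule f''_ge0_imp_convex[OF _ d1 d2 nn]) auto
  have "f (\<Sum>i\<in>S. p i *\<^sub>R xs i) \<le> (\<Sum>i\<in>S. p i * f (xs i))"
    by (rule convex_on_sum[OF S cv p(1)]) (use p xs in auto)
  thus ?thesis unfolding f_def by (simp add: sum_negf)
qed



definition flhZ :: "real \<Rightarrow> (nat \<Rightarrow> real) \<Rightarrow> (nat \<Rightarrow> nat \<Rightarrow> real) \<Rightarrow> nat \<Rightarrow> real" where
  "flhZ \<zeta> y xb t = (\<Sum>j = 1..t. flh_w \<zeta> y xb t j * exp (- \<zeta> * (y t - xb j t)\<^sup>2))"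

lemma flh_step:
  assumes "1 \<le> t" "1 \<le> i" "i \<le> t"
  shows "flh_w \<zeta> y xb (Suc t) i = (1 - 1 / real (Suc t)) *
     (flh_w \<zeta> y xb t i * exp (- \<zeta> * (y t - xb i t)\<^sup>2) / flhZ \<zeta> y xb t)"
  using assms by (simp add: flhZ_def Let_def)

lemma flh_new: "1 \<le> t \<Longrightarrow> flh_w \<zeta> y xb t t = 1 / real t"
  by (cases t) (auto simp: Let_def)

lemma flh_pos_sum:
  assumes "1 \<le> t"
  shows "(\<forall>i\<in>{1..t}. flh_w \<zeta> y xb t i > 0) \<and> sum (flh_w \<zeta> y xb t) {1..t} = 1"
  using assms
proof (induction t rule: nat_induct_at_least)
  case base then show ?case by simp
next
  case (Suc t)
  let ?W = "flh_w \<zeta> y xb t"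
  let ?e = "\<lambda>i. exp (- \<zeta> * (y t - xb i t)\<^sup>2)"
  let ?Z = "flhZ \<zeta> y xb t"
  have Zp: "?Z > 0" unfolding flhZ_def
    using Suc.IH Suc.hyps by (intro sum_pos) auto
  have c: "1 - 1 / real (Suc t) > 0" using Suc.hyps by (simp add: field_simps)
  have pos: "\<forall>i\<in>{1..Suc t}. flh_w \<zeta> y xb (Suc t) i > 0"
  proof
    fix i assume i: "i \<in> {1..Suc t}"
    show "flh_w \<zeta> y xb (Suc t) i > 0"
    proof (cases "i = Suc t")
      case True then show ?thesis by (simp add: flh_new)
    next
      case False
      hence "i \<le> t" using i by auto
      have "?W i > 0" using i \<open>i \<le> t\<close> Suc.IH by auto
      hence "?W i * ?e i / ?Z > 0" using Zp by simp
      moreover have eq: "flh_w \<zeta> y xb (Suc t) i = (1 - 1 / real (Suc t)) * (?W i * ?e i / ?Z)"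
        using i Suc.hyps \<open>i \<le> t\<close> by (intro flh_step) auto
      ultimately show ?thesis using c by (simp only: eq) (rule mult_pos_pos)
    qed
  qed
  have "sum (flh_w \<zeta> y xb (Suc t)) {1..Suc t} = sum (flh_w \<zeta> y xb (Suc t)) {1..t} + 1 / real (Suc t)"
    by (simp add: flh_new)
  also have "sum (flh_w \<zeta> y xb (Suc t)) {1..t}
      = (\<Sum>i=1..t. (1 - 1 / real (Suc t)) * (?W i * ?e i / ?Z))"
    using Suc.hyps by (intro sum.cong refl flh_step) auto
  also have "\<dots> = (1 - 1 / real (Suc t)) * ((\<Sum>i=1..t. ?W i * ?e i) / ?Z)"
    by (simp add: sum_distrib_left sum_divide_distrib)
  also have "\<dots> = 1 - 1 / real (Suc t)" using Zp by (simp add: flhZ_def)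
  finally have "sum (flh_w \<zeta> y xb (Suc t)) {1..Suc t} = 1" by simp
  with pos show ?case by blast
qed



definition flhX :: "real \<Rightarrow> (nat \<Rightarrow> real) \<Rightarrow> (nat \<Rightarrow> nat \<Rightarrow> real) \<Rightarrow> nat \<Rightarrow> real" where
  "flhX \<zeta> y xb t = (\<Sum>j = 1..t. flh_w \<zeta> y xb t j * xb j t)"

definition flhH :: "real \<Rightarrow> (nat \<Rightarrow> real) \<Rightarrow> (nat \<Rightarrow> nat \<Rightarrow> real) \<Rightarrow> nat \<Rightarrow> nat \<Rightarrow> real" where
  "flhH \<zeta> y xb t a = flh_w \<zeta> y xb t a * exp (- \<zeta> * (y t - xb a t)\<^sup>2) / flhZ \<zeta> y xb t"

locale flh_setting =
  fixes G B \<zeta> :: real and y :: "nat \<Rightarrow> real" and xb :: "nat \<Rightarrow> nat \<Rightarrow> real" and N :: nat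
  assumes GB: "G + B > 0" and z: "\<zeta> = 1 / (2 * (G + B)\<^sup>2)"
    and yb: "\<forall>t\<in>{1..N}. \<bar>y t\<bar> \<le> G"
    and xbb: "\<forall>t\<in>{1..N}. \<forall>j\<in>{1..t}. - B \<le> xb j t \<and> xb j t \<le> B"
begin

abbreviation "W \<equiv> flh_w \<zeta> y xb"
abbreviation "Z \<equiv> flhZ \<zeta> y xb"
abbreviation "H \<equiv> flhH \<zeta> y xb"
abbreviation "X \<equiv> flhX \<zeta> y xb"

lemma Zpos: "1 \<le> t \<Longrightarrow> Z t > 0"
  unfolding flhZ_def using flh_pos_sum[of t] by (intro sum_pos) auto

lemma Hpos: "1 \<le> a \<Longrightarrow> a \<le> t \<Longrightarrow> H t a > 0"
  unfolding flhH_def using flh_pos_sum[of t] Zpos[of t] by auto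

lemma Hle1: "1 \<le> a \<Longrightarrow> a \<le> t \<Longrightarrow> H t a \<le> 1"
proof -
  assume a: "1 \<le> a" "a \<le> t"
  have "W t a * exp (- \<zeta> * (y t - xb a t)\<^sup>2) \<le> Z t" unfolding flhZ_def
    using a flh_pos_sum[of t] by (intro member_le_sum) (auto intro: less_imp_le)
  thus ?thesis unfolding flhH_def using Zpos[of t] a by simp
qed

lemma W_next: "1 \<le> a \<Longrightarrow> a \<le> t \<Longrightarrow> W (Suc t) a = real t / real (Suc t) * H t a"
  unfolding flhH_def by (subst flh_step) (auto simp: field_simps)

lemma step_regret:
  assumes a: "1 \<le> a" "a \<le> t" and tN: "t \<le> N"
  shows "\<zeta> * ((y t - X t)\<^sup>2 - (y t - xb a t)\<^sup>2) \<le> ln (H t a) - ln (W t a)"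
proof -
  have t1: "1 \<le> t" using a by simp
  have Zle: "Z t \<le> exp (- \<zeta> * (y t - X t)\<^sup>2)"
    unfolding flhZ_def flhX_def
    using flh_pos_sum[OF t1] xbb yb t1 tN
    by (intro exp_concave[OF GB z]) (auto intro: less_imp_le)
  have "ln (Z t) \<le> - \<zeta> * (y t - X t)\<^sup>2"
    using Zle Zpos[OF t1] by (metis ln_exp ln_le_cancel_iff exp_gt_zero)
  moreover have Wp: "W t a > 0" using flh_pos_sum[OF t1] a by auto
  moreover have "ln (H t a) = ln (W t a) + (- \<zeta> * (y t - xb a t)\<^sup>2) - ln (Z t)"
    unfolding flhH_def using Wp Zpos[OF t1] by (simp add: ln_div ln_mult)
  ultimately show ?thesis by (simp add: algebra_simps)
qed

lemma acc_regret:
  assumes a: "1 \<le> a" and ab: "a \<le> b" and bN: "b \<le> N"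
  shows "\<zeta> * (\<Sum>t=a..b. (y t - X t)\<^sup>2 - (y t - xb a t)\<^sup>2)
     \<le> ln (H b a) - ln (W a a) + ln (real b) - ln (real a)"
  using ab bN
proof (induction b rule: nat_induct_at_least)
  case base then show ?case using step_regret[OF a order.refl] by simp
next
  case (Suc b)
  have b1: "1 \<le> b" using a Suc.hyps by simp
  have "\<zeta> * (\<Sum>t=a..Suc b. (y t - X t)\<^sup>2 - (y t - xb a t)\<^sup>2)
     = \<zeta> * (\<Sum>t=a..b. (y t - X t)\<^sup>2 - (y t - xb a t)\<^sup>2)
       + \<zeta> * ((y (Suc b) - X (Suc b))\<^sup>2 - (y (Suc b) - xb a (Suc b))\<^sup>2)"
    using Suc.hyps by (simp add: algebra_simps)
  also have "\<dots> \<le> (ln (H b a) - ln (W a a) + ln (real b) - ln (real a))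
       + (ln (H (Suc b) a) - ln (W (Suc b) a))"
    using Suc.IH Suc.prems Suc.hyps step_regret[of a "Suc b"] a by (intro add_mono) auto
  also have "ln (W (Suc b) a) = ln (real b) - ln (real (Suc b)) + ln (H b a)"
    using W_next[OF a Suc.hyps] Hpos[OF a Suc.hyps] b1 by (simp add: ln_mult ln_div)
  finally show ?case by simp
qed

lemma flh_regret:
  assumes a: "1 \<le> a" and ab: "a \<le> b" and bN: "b \<le> N"
  shows "\<zeta> * (\<Sum>t=a..b. (y t - X t)\<^sup>2 - (y t - xb a t)\<^sup>2) \<le> ln (real b)"
proof -
  have "ln (H b a) \<le> 0" using Hle1[OF a ab] Hpos[OF a ab] by simp
  moreover have "ln (W a a) = - ln (real a)" using flh_new[OF a] a by (simp add: ln_div)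
  ultimately show ?thesis using acc_regret[OF assms] by simp
qed

end


definition V :: "(nat \<Rightarrow> real) \<Rightarrow> nat \<Rightarrow> nat \<Rightarrow> real" where
  "V u a b = (\<Sum>t\<in>{a..<b}. \<bar>u (Suc t) - u t\<bar>)"

lemma V_split: "a \<le> b \<Longrightarrow> b \<le> c \<Longrightarrow> V u a c = V u a b + V u b c"
  unfolding V_def by (simp add: sum.atLeastLessThan_concat)

lemma V_nonneg: "V u a b \<ge> 0"
  unfolding V_def by (simp add: sum_nonneg)

lemma V_diff0: "s \<le> t \<Longrightarrow> \<bar>u t - u s\<bar> \<le> V u s t"
proof (induction t rule: nat_induct_at_least)
  case base then show ?case by (simp add: V_def)
next
  case (Suc t)
  have "V u s (Suc t) = V u s t + \<bar>u (Suc t) - u t\<bar>"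
    using Suc.hyps V_split[of s t "Suc t" u] by (simp add: V_def)
  thus ?case using Suc.IH by linarith
qed

lemma V_mono: "a \<le> s \<Longrightarrow> s \<le> t \<Longrightarrow> t \<le> b \<Longrightarrow> V u s t \<le> V u a b"
  using V_split[of a s t u] V_split[of a t b u] V_nonneg[of u a s] V_nonneg[of u t b] by linarith

lemma V_diff: "a \<le> s \<Longrightarrow> s \<le> b \<Longrightarrow> a \<le> t \<Longrightarrow> t \<le> b \<Longrightarrow> \<bar>u t - u s\<bar> \<le> V u a b"
proof (cases "s \<le> t")
  case True
  assume "a \<le> s" "s \<le> b" "a \<le> t" "t \<le> b"
  thus ?thesis using V_diff0[OF True, of u] V_mono[of a s t b u] True by linarith
next
  case False
  assume "a \<le> s" "s \<le> b" "a \<le> t" "t \<le> b"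
  thus ?thesis using V_diff0[of t s u] V_mono[of a t s b u] False by linarith
qed

lemma tv_V: "tv n u = V u 1 n"
proof -
  have "tv n u = (\<Sum>t\<in>{2..n}. \<bar>u t - u (t - 1)\<bar>)" by (simp add: tv_def)
  also have "\<dots> = (\<Sum>t\<in>{1..<n}. \<bar>u (Suc t) - u t\<bar>)"
    by (rule sum.reindex_bij_witness[of _ Suc "\<lambda>t. t - 1"]) auto
  finally show ?thesis by (simp add: V_def)
qed

lemma sum_by_parts:
  fixes d s :: "nat \<Rightarrow> real"
  assumes "1 \<le> a" "a \<le> b"
  shows "(\<Sum>t=a..b. d t * (s t - s (t - 1)))
     = d b * s b - d a * s (a - 1) + (\<Sum>t\<in>{a..<b}. s t * (d t - d (Suc t)))"
  using assms(2)
proof (induction b rule: nat_induct_at_least)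
  case base then show ?case by (simp add: algebra_simps)
next
  case (Suc b)
  have "(\<Sum>t\<in>{a..<Suc b}. s t * (d t - d (Suc t))) = (\<Sum>t\<in>{a..<b}. s t * (d t - d (Suc t))) + s b * (d b - d (Suc b))"
    using Suc.hyps by simp
  thus ?case using Suc.IH Suc.hyps by (simp add: algebra_simps)
qed



lemma interval_comp:
  fixes B lam C :: real
  assumes B1: "B \<ge> 1" and K: "kkt n B C y u lam s gm gp"
    and ub: "\<forall>t\<in>{1..n}. - B \<le> u t \<and> u t \<le> B"
    and a: "1 \<le> a" "a \<le> b" "b \<le> n"
    and small: "real (Suc (b - a)) * (V u a b)\<^sup>2 \<le> 1"
  shows "\<exists>w. - B \<le> w \<and> w \<le> B \<and>
     (\<Sum>t=a..b. (y t - w)\<^sup>2 - (y t - u t)\<^sup>2) \<le> 1 + 6 * lam * V u a b"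
proof -
  let ?V = "V u a b"
  have lam: "lam \<ge> 0" and sb: "\<forall>t\<in>{0..n}. - 1 \<le> s t \<and> s t \<le> 1"
    and sg: "\<forall>t\<in>{1..<n}. u (t + 1) \<noteq> u t \<longrightarrow> s t = sgn (u (t + 1) - u t)"
    and eq: "\<forall>t\<in>{1..n}. u t - y t = lam * (s t - s (t - 1)) + gm t - gp t \<and>
        gm t \<ge> 0 \<and> gp t \<ge> 0 \<and> gm t * (u t + B) = 0 \<and> gp t * (u t - B) = 0"
    using K unfolding kkt_def by auto
  have V0: "?V \<ge> 0" by (rule V_nonneg)
  have V1: "?V \<le> 1"
  proof (rule ccontr)
    assume "\<not> ?V \<le> 1"
    hence "1 < ?V * ?V" by (metis less_1_mult not_le)
    moreover have "?V * ?V \<le> real (Suc (b - a)) * ?V\<^sup>2"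
    proof -
      have "1 * (?V * ?V) \<le> real (Suc (b - a)) * (?V * ?V)"
        by (intro mult_right_mono) auto
      thus ?thesis by (simp add: power2_eq_square)
    qed
    ultimately show False using small by simp
  qed
  have closeu: "\<bar>u t - u t'\<bar> \<le> 1" if "t \<in> {a..b}" "t' \<in> {a..b}" for t t'
    using V_diff[of a t' b t u] that V1 by auto
  obtain w where wb: "- B \<le> w" "w \<le> B" and wt: "\<forall>t\<in>{a..b}. \<bar>w - u t\<bar> \<le> ?V"
    and wg: "\<forall>t\<in>{a..b}. (w - u t) * (gm t - gp t) = 0"
  proof (cases "\<exists>t0\<in>{a..b}. u t0 = - B")
    case True
    then obtain t0 where t0: "t0 \<in> {a..b}" "u t0 = - B" by blast
    show ?thesis
    proof (rule that[of "- B"])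
      show "\<forall>t\<in>{a..b}. \<bar>- B - u t\<bar> \<le> ?V"
      proof
        fix t assume "t \<in> {a..b}"
        hence "\<bar>u t - u t0\<bar> \<le> ?V" using t0 V_diff[of a t0 b t u] by auto
        thus "\<bar>- B - u t\<bar> \<le> ?V" using t0 by (simp add: abs_le_iff)
      qed
      show "\<forall>t\<in>{a..b}. (- B - u t) * (gm t - gp t) = 0"
      proof
        fix t assume t: "t \<in> {a..b}"
        have tn: "t \<in> {1..n}" using t a by auto
        have "u t \<noteq> B" using closeu[OF t t0(1)] t0 B1 by auto
        hence "gp t = 0" using eq tn by auto
        moreover have "gm t * (u t + B) = 0" using eq tn by auto
        ultimately show "(- B - u t) * (gm t - gp t) = 0" by (simp add: algebra_simps)
      qed
    qed (use B1 in auto)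
  next
    case False
    note F1 = False
    show ?thesis
    proof (cases "\<exists>t0\<in>{a..b}. u t0 = B")
      case True
      then obtain t0 where t0: "t0 \<in> {a..b}" "u t0 = B" by blast
      show ?thesis
      proof (rule that[of B])
        show "\<forall>t\<in>{a..b}. \<bar>B - u t\<bar> \<le> ?V"
      proof
        fix t assume "t \<in> {a..b}"
        hence "\<bar>u t - u t0\<bar> \<le> ?V" using t0 V_diff[of a t0 b t u] by auto
        thus "\<bar>B - u t\<bar> \<le> ?V" using t0 by (simp add: abs_le_iff)
      qed
        show "\<forall>t\<in>{a..b}. (B - u t) * (gm t - gp t) = 0"
        proof
          fix t assume t: "t \<in> {a..b}"
          have tn: "t \<in> {1..n}" using t a by auto
          have "u t \<noteq> - B" using F1 t by auto
          hence "gm t = 0" using eq tn by auto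
          moreover have "gp t * (u t - B) = 0" using eq tn by auto
          ultimately show "(B - u t) * (gm t - gp t) = 0" by (simp add: algebra_simps)
        qed
      qed (use B1 in auto)
    next
      case False
      show ?thesis
      proof (rule that[of "u a"])
        show "- B \<le> u a" "u a \<le> B" using ub a by auto
        show "\<forall>t\<in>{a..b}. \<bar>u a - u t\<bar> \<le> ?V" using V_diff[of a t b a u for t] a by (auto simp: abs_minus_commute)
        show "\<forall>t\<in>{a..b}. (u a - u t) * (gm t - gp t) = 0"
        proof
          fix t assume t: "t \<in> {a..b}"
          have tn: "t \<in> {1..n}" using t a by auto
          have "u t \<noteq> - B" "u t \<noteq> B" using F1 False t by auto
          hence "gm t = 0" "gp t = 0" using eq tn by auto
          thus "(u a - u t) * (gm t - gp t) = 0" by simp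
        qed
      qed
    qed
  qed
  define d where "d t = w - u t" for t
  have split: "(y t - w)\<^sup>2 - (y t - u t)\<^sup>2 = (d t)\<^sup>2 + 2 * lam * (d t * (s t - s (t - 1)))
      + 2 * (d t * (gm t - gp t))" if "t \<in> {a..b}" for t
  proof -
    have e1: "u t - y t = lam * (s t - s (t - 1)) + gm t - gp t" using eq that a by auto
    have "(y t - w)\<^sup>2 - (y t - u t)\<^sup>2 = (d t)\<^sup>2 + 2 * d t * (u t - y t)"
      by (simp add: d_def power2_eq_square algebra_simps)
    also have "\<dots> = (d t)\<^sup>2 + 2 * d t * (lam * (s t - s (t - 1)) + gm t - gp t)"
      by (simp only: e1)
    finally show ?thesis by (simp add: algebra_simps)
  qed
  have "(\<Sum>t=a..b. (y t - w)\<^sup>2 - (y t - u t)\<^sup>2)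
      = (\<Sum>t=a..b. (d t)\<^sup>2) + 2 * lam * (\<Sum>t=a..b. d t * (s t - s (t - 1)))
        + 2 * (\<Sum>t=a..b. d t * (gm t - gp t))"
  proof -
    have "(\<Sum>t=a..b. (y t - w)\<^sup>2 - (y t - u t)\<^sup>2) = (\<Sum>t=a..b. (d t)\<^sup>2 + 2 * lam * (d t * (s t - s (t - 1)))
      + 2 * (d t * (gm t - gp t)))" by (rule sum.cong[OF refl split])
    thus ?thesis by (simp add: sum.distrib sum_distrib_left)
  qed
  also have "(\<Sum>t=a..b. d t * (gm t - gp t)) = 0"
    using wg unfolding d_def by (intro sum.neutral) blast
  also have "(\<Sum>t=a..b. (d t)\<^sup>2) \<le> real (Suc (b - a)) * ?V\<^sup>2"
  proof -
    have "(\<Sum>t=a..b. (d t)\<^sup>2) \<le> (\<Sum>t=a..b. ?V\<^sup>2)"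
    proof (rule sum_mono)
      fix t assume "t \<in> {a..b}"
      hence "\<bar>d t\<bar> \<le> ?V" using wt by (simp add: d_def)
      thus "(d t)\<^sup>2 \<le> ?V\<^sup>2" by (metis abs_ge_zero power2_abs power_mono)
    qed
    also have "\<dots> = real (Suc (b - a)) * ?V\<^sup>2" using a by simp
    finally show ?thesis .
  qed
  also have "(\<Sum>t=a..b. d t * (s t - s (t - 1))) \<le> 3 * ?V"
  proof -
    have "(\<Sum>t=a..b. d t * (s t - s (t - 1)))
        = d b * s b - d a * s (a - 1) + (\<Sum>t\<in>{a..<b}. s t * (d t - d (Suc t)))"
      by (rule sum_by_parts[OF a(1,2)])
    also have "(\<Sum>t\<in>{a..<b}. s t * (d t - d (Suc t))) = ?V"
      unfolding V_def
    proof (rule sum.cong[OF refl])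
      fix t assume t: "t \<in> {a..<b}"
      hence t1: "t \<in> {1..<n}" using a by auto
      show "s t * (d t - d (Suc t)) = \<bar>u (Suc t) - u t\<bar>"
      proof (cases "u (Suc t) = u t")
        case True then show ?thesis by (simp add: d_def)
      next
        case False
        hence "s t = sgn (u (Suc t) - u t)" using sg t1 by auto
        thus ?thesis by (simp add: d_def sgn_mult_abs abs_sgn mult.commute)
      qed
    qed
    finally have E: "(\<Sum>t=a..b. d t * (s t - s (t - 1))) = d b * s b - d a * s (a - 1) + ?V" .
    have E1: "d b * s b \<le> ?V"
    proof -
      have "\<bar>d b * s b\<bar> \<le> ?V * 1"
        unfolding abs_mult using wt sb a by (intro mult_mono) (auto simp: d_def abs_le_iff)
      thus ?thesis by simp
    qed
    have E2: "- d a * s (a - 1) \<le> ?V"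
    proof -
      have "\<bar>d a * s (a - 1)\<bar> \<le> ?V * 1"
        unfolding abs_mult using wt sb a by (intro mult_mono) (auto simp: d_def abs_le_iff)
      thus ?thesis by simp
    qed
    show ?thesis using E E1 E2 by linarith
  qed
  finally have "(\<Sum>t=a..b. (y t - w)\<^sup>2 - (y t - u t)\<^sup>2) \<le> real (Suc (b - a)) * ?V\<^sup>2 + 2 * lam * (3 * ?V)"
    using lam by (simp add: mult_left_mono)
  thus ?thesis using small wb by (intro exI[of _ w]) auto
qed



lemma ln_n_ge1: "n \<ge> 3 \<Longrightarrow> ln (real n) \<ge> 1"
proof -
  assume n: "n \<ge> 3"
  have "1 = ln (exp (1::real))" by (simp only: ln_exp)
  also have "\<dots> \<le> ln 3" using exp_le by (subst ln_le_cancel_iff) auto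
  also have "\<dots> \<le> ln (real n)" using n by (subst ln_le_cancel_iff) auto
  finally show ?thesis .
qed

lemma interval_regret:
  fixes B G :: real
  assumes B1: "B \<ge> 1" "G \<ge> B" and n3: "n \<ge> 3"
    and yb: "\<forall>t\<in>{1..n}. - G \<le> y t \<and> y t \<le> G"
    and ib: "\<forall>j\<in>{1..n}. - B \<le> init j \<and> init j \<le> B"
    and ub: "\<forall>t\<in>{1..n}. - B \<le> u t \<and> u t \<le> B"
    and K: "kkt n B C y u lam s gm gp"
    and a: "1 \<le> a" "a \<le> b" "b \<le> n"
    and small: "real (Suc (b - a)) * (V u a b)\<^sup>2 \<le> 1"
  shows "(\<Sum>t=a..b. (y t - flh_ogd B G init y t)\<^sup>2 - (y t - u t)\<^sup>2)
     \<le> 4 * (G + B)\<^sup>2 * ln (real n) + 1 + 6 * lam * V u a b"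
proof -
  define \<zeta> where "\<zeta> = 1 / (2 * (G + B)\<^sup>2)"
  define xb where "xb = base_pred B init y"
  have GB: "G + B > 0" using B1 by simp
  have zp: "\<zeta> > 0" using GB by (simp add: \<zeta>_def)
  have xeq: "flh_ogd B G init y t = flhX \<zeta> y xb t" for t
    by (simp add: flh_ogd_def flhX_def Let_def \<zeta>_def xb_def)
  have L1: "ln (real n) \<ge> 1" using ln_n_ge1[OF n3] .
  interpret fs: flh_setting G B \<zeta> y xb n
  proof
    show "G + B > 0" by (rule GB)
    show "\<zeta> = 1 / (2 * (G + B)\<^sup>2)" by (rule \<zeta>_def)
    show "\<forall>t\<in>{1..n}. \<bar>y t\<bar> \<le> G" using yb by (auto simp: abs_le_iff)
    show "\<forall>t\<in>{1..n}. \<forall>j\<in>{1..t}. - B \<le> xb j t \<and> xb j t \<le> B"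
    proof (intro ballI)
      fix t j assume t: "t \<in> {1..n}" and j: "j \<in> {1..t}"
      have "- B \<le> init j" "init j \<le> B" using ib t j by auto
      thus "- B \<le> xb j t \<and> xb j t \<le> B"
        unfolding xb_def base_pred_def using B1 by (intro ogd_range) auto
    qed
  qed
  have F1: "(\<Sum>t=a..b. (y t - flhX \<zeta> y xb t)\<^sup>2 - (y t - xb a t)\<^sup>2) \<le> 2 * (G + B)\<^sup>2 * ln (real n)"
  proof -
    let ?S = "(\<Sum>t=a..b. (y t - flhX \<zeta> y xb t)\<^sup>2 - (y t - xb a t)\<^sup>2)"
    have "\<zeta> * ?S \<le> ln (real b)" by (rule fs.flh_regret[OF a])
    also have "\<dots> \<le> ln (real n)" using a by (subst ln_le_cancel_iff) auto
    finally have "\<zeta> * ?S \<le> ln (real n)" .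
    hence "?S \<le> ln (real n) / \<zeta>" using zp by (simp add: field_simps)
    thus ?thesis using GB by (simp add: \<zeta>_def mult.commute)
  qed
  obtain w where wb: "- B \<le> w" "w \<le> B"
    and F3: "(\<Sum>t=a..b. (y t - w)\<^sup>2 - (y t - u t)\<^sup>2) \<le> 1 + 6 * lam * V u a b"
    using interval_comp[OF B1(1) K ub a small] by blast
  have F2: "(\<Sum>t=a..b. (y t - xb a t)\<^sup>2 - (y t - w)\<^sup>2) \<le> 2 * (G + B)\<^sup>2 * ln (real n)"
  proof -
    have "(\<Sum>t=a..b. (y t - xb a t)\<^sup>2 - (y t - w)\<^sup>2) \<le> (G + B)\<^sup>2 * (1 + ln (real (Suc (b - a))))"
    proof -
      have yb': "\<forall>t\<in>{a..b}. \<bar>y t\<bar> \<le> G"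
      proof
        fix t assume "t \<in> {a..b}"
        hence "t \<in> {1..n}" using a by auto
        hence "- G \<le> y t \<and> y t \<le> G" using yb by blast
        thus "\<bar>y t\<bar> \<le> G" by (simp add: abs_le_iff)
      qed
      have "a \<in> {1..n}" using a by auto
      hence "- B \<le> init a" "init a \<le> B" using ib by auto
      thus ?thesis unfolding xb_def using B1 wb yb' a
        by (intro ogd_interval) auto
    qed
    also have "\<dots> \<le> (G + B)\<^sup>2 * (1 + ln (real n))"
      using a by (intro mult_left_mono add_left_mono) (auto simp: ln_le_cancel_iff)
    also have "\<dots> \<le> (G + B)\<^sup>2 * (2 * ln (real n))"
      using L1 by (intro mult_left_mono) auto
    finally show ?thesis by simp
  qed
  have "(\<Sum>t=a..b. (y t - flh_ogd B G init y t)\<^sup>2 - (y t - u t)\<^sup>2)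
     = (\<Sum>t=a..b. (y t - flhX \<zeta> y xb t)\<^sup>2 - (y t - xb a t)\<^sup>2)
       + (\<Sum>t=a..b. (y t - xb a t)\<^sup>2 - (y t - w)\<^sup>2)
       + (\<Sum>t=a..b. (y t - w)\<^sup>2 - (y t - u t)\<^sup>2)"
    by (simp add: xeq sum_subtractf)
  thus ?thesis using F1 F2 F3 by linarith
qed



lemma cut_exists:
  fixes P :: "nat \<Rightarrow> bool"
  shows "a \<le> n \<Longrightarrow> P a \<Longrightarrow> \<not> P n \<Longrightarrow> \<exists>b. a \<le> b \<and> b < n \<and> P b \<and> \<not> P (Suc b)"
proof (induction n)
  case 0 then show ?case by auto
next
  case (Suc n)
  have an: "a \<le> n" using Suc.prems by (cases "a = Suc n") auto
  show ?case
  proof (cases "P n")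
    case True then show ?thesis using an Suc.prems by auto
  next
    case False
    then obtain b where "a \<le> b \<and> b < n \<and> P b \<and> \<not> P (Suc b)" using Suc.IH an Suc.prems by blast
    thus ?thesis by (intro exI[of _ b]) auto
  qed
qed

lemma key_ineq:
  fixes v \<mu> :: real and L :: nat
  assumes "\<mu> > 0" "v \<ge> 0" "real (Suc L) * v\<^sup>2 > 1" "L \<ge> 1"
  shows "1 \<le> \<mu> * v + 2 * real L / \<mu>\<^sup>2"
proof (cases "\<mu> * v \<ge> 1")
  case True
  moreover have "2 * real L / \<mu>\<^sup>2 \<ge> 0" by simp
  ultimately show ?thesis by linarith
next
  case False
  hence "v < 1 / \<mu>" using assms(1) by (simp add: field_simps)
  hence "v\<^sup>2 \<le> (1 / \<mu>)\<^sup>2" using assms(2) by (intro power_mono) auto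
  hence "real (Suc L) * v\<^sup>2 \<le> real (Suc L) * (1 / \<mu>)\<^sup>2" by (intro mult_left_mono) auto
  hence "1 < real (Suc L) / \<mu>\<^sup>2" using assms(3) by (simp add: power_divide)
  also have "\<dots> \<le> 2 * real L / \<mu>\<^sup>2" using assms(1,4) by (intro divide_right_mono) auto
  finally have "1 \<le> 2 * real L / \<mu>\<^sup>2" by simp
  moreover have "\<mu> * v \<ge> 0" using assms by simp
  ultimately show ?thesis by linarith
qed

lemma greedy:
  fixes r :: "nat \<Rightarrow> real" and Q lam \<mu> :: real
  assumes Q: "Q \<ge> 0" and lam: "lam \<ge> 0" and mu: "\<mu> > 0"
    and per: "\<And>a b. 1 \<le> a \<Longrightarrow> a \<le> b \<Longrightarrow> b \<le> n \<Longrightarrow> real (Suc (b - a)) * (V u a b)\<^sup>2 \<le> 1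
       \<Longrightarrow> (\<Sum>t=a..b. r t) \<le> Q + 6 * lam * V u a b"
  shows "1 \<le> a \<Longrightarrow> a \<le> n \<Longrightarrow> (\<Sum>t=a..n. r t)
     \<le> Q * (1 + \<mu> * V u a n + 2 * (real n - real a + 1) / \<mu>\<^sup>2) + 6 * lam * V u a n"
proof (induction "n - a" arbitrary: a rule: less_induct)
  case less
  note a = less.prems
  let ?P = "\<lambda>b. real (Suc (b - a)) * (V u a b)\<^sup>2 \<le> 1"
  show ?case
  proof (cases "?P n")
    case True
    have "(\<Sum>t=a..n. r t) \<le> Q + 6 * lam * V u a n" using per[OF a(1) a(2) order.refl True] by simp
    moreover have "Q * 1 \<le> Q * (1 + \<mu> * V u a n + 2 * (real n - real a + 1) / \<mu>\<^sup>2)"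
      using Q mu V_nonneg[of u a n] a by (intro mult_left_mono) auto
    ultimately show ?thesis by simp
  next
    case False
    have Pa: "?P a" by (simp add: V_def)
    obtain b where b: "a \<le> b" "b < n" "?P b" "\<not> ?P (Suc b)"
      using cut_exists[of a n ?P, OF a(2) Pa False] by blast
    have IH: "(\<Sum>t=Suc b..n. r t)
     \<le> Q * (1 + \<mu> * V u (Suc b) n + 2 * (real n - real (Suc b) + 1) / \<mu>\<^sup>2) + 6 * lam * V u (Suc b) n"
      using less.hyps[of "Suc b"] a b by auto
    have I1: "(\<Sum>t=a..b. r t) \<le> Q + 6 * lam * V u a b" using per[of a b] a b by auto
    have split: "(\<Sum>t=a..n. r t) = (\<Sum>t=a..b. r t) + (\<Sum>t=Suc b..n. r t)"
    proof -
      have "sum r {a..b + (n - b)} = sum r {a..b} + sum r {b + 1..b + (n - b)}"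
        by (rule sum.ub_add_nat) (use b in simp)
      thus ?thesis using b by simp
    qed
    have k: "1 \<le> \<mu> * V u a (Suc b) + 2 * real (Suc b - a) / \<mu>\<^sup>2"
    proof (rule key_ineq[OF mu V_nonneg])
      show "real (Suc (Suc b - a)) * (V u a (Suc b))\<^sup>2 > 1" using b(4) by simp
      show "1 \<le> Suc b - a" using b by simp
    qed
    have kQ: "Q * 1 \<le> Q * (\<mu> * V u a (Suc b) + 2 * real (Suc b - a) / \<mu>\<^sup>2)"
      using k Q by (intro mult_left_mono) auto
    have V1: "V u a n = V u a (Suc b) + V u (Suc b) n" using b by (intro V_split) auto
    have V2: "V u a (Suc b) = V u a b + V u b (Suc b)" using b by (intro V_split) auto
    have V3: "V u b (Suc b) \<ge> 0" by (rule V_nonneg)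
    have lV: "lam * V u a b + lam * V u (Suc b) n \<le> lam * V u a n"
      using V1 V2 V3 lam by (simp add: algebra_simps)
    have r1: "real (Suc b - a) = real b - real a + 1" using b by simp
    have "Q * (1 + \<mu> * V u a n + 2 * (real n - real a + 1) / \<mu>\<^sup>2)
       = Q * (\<mu> * V u a (Suc b) + 2 * real (Suc b - a) / \<mu>\<^sup>2)
         + Q * (1 + \<mu> * V u (Suc b) n + 2 * (real n - real (Suc b) + 1) / \<mu>\<^sup>2)"
    proof -
      have d: "2 * (real n - real a + 1) / \<mu>\<^sup>2
          = 2 * (real b - real a + 1) / \<mu>\<^sup>2 + 2 * (real n - real (Suc b) + 1) / \<mu>\<^sup>2"
        using mu by (simp add: field_simps)
      show ?thesis unfolding V1 r1 d by (simp add: distrib_left)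
    qed
    thus ?thesis using split IH I1 kQ lV by linarith
  qed
qed



lemma cube_root:
  fixes x :: real assumes "x > 0"
  shows "(x powr (1/3)) ^ 3 = x" "x powr (2/3) = (x powr (1/3))\<^sup>2" "x powr (1/3) > 0"
proof -
  have p: "x powr (1/3) > 0" using assms by simp
  show "(x powr (1/3)) ^ 3 = x"
    using p assms by (simp add: powr_realpow[symmetric] powr_powr)
  show "x powr (2/3) = (x powr (1/3))\<^sup>2"
    using p assms by (simp add: powr_realpow[symmetric] powr_powr)
  show "x powr (1/3) > 0" by (rule p)
qed

theorem lemma3:
  fixes B G \<kappa> :: real
  assumes "B \<ge> 1" and "G \<ge> B" and "\<kappa> > 0"
  shows "\<exists>c > 0. \<forall>(n::nat) (C::real) (y::nat \<Rightarrow> real) (init::nat \<Rightarrow> real) u lam s gm gp.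
    n \<ge> 3 \<longrightarrow> C > 0 \<longrightarrow>
    (\<forall>t \<in> {1..n}. - G \<le> y t \<and> y t \<le> G) \<longrightarrow>
    (\<forall>j \<in> {1..n}. - B \<le> init j \<and> init j \<le> B) \<longrightarrow>
    offline_opt n B C y u \<longrightarrow>
    kkt n B C y u lam s gm gp \<longrightarrow>
    lam \<le> \<kappa> * real n powr (1/3) / C powr (1/3) \<longrightarrow>
    (\<Sum>t = 1..n. (y t - flh_ogd B G init y t)\<^sup>2 - (y t - u t)\<^sup>2)
      \<le> c * ln (real n) * max (real n powr (1/3) * C powr (2/3)) 1"
proof -
  note B1 = assms(1,2)
  define q where "q = 4 * (G + B)\<^sup>2 + 1"
  define c where "c = 4 * q + 6 * \<kappa>"
  have qp: "q > 0" unfolding q_def by (simp add: add_nonneg_pos)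
  have cp: "c > 0" using qp assms(3) by (simp add: c_def)
  show ?thesis
  proof (intro exI[of _ c] conjI allI impI)
    show "c > 0" by (rule cp)
    fix n :: nat and C :: real and y init u lam s gm gp
    assume n3: "n \<ge> 3" and Cp: "C > 0"
      and yb: "\<forall>t \<in> {1..n}. - G \<le> y t \<and> y t \<le> G"
      and ib: "\<forall>j \<in> {1..n}. - B \<le> init j \<and> init j \<le> B"
      and opt: "offline_opt n B C y u" and K: "kkt n B C y u lam s gm gp"
      and lamb: "lam \<le> \<kappa> * real n powr (1/3) / C powr (1/3)"
    have ub: "\<forall>t\<in>{1..n}. - B \<le> u t \<and> u t \<le> B" and tvC: "tv n u \<le> C"
      using opt unfolding offline_opt_def feasible_def by auto
    have lam0: "lam \<ge> 0" using K unfolding kkt_def by auto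
    define L where "L = ln (real n)"
    have L1: "L \<ge> 1" unfolding L_def by (rule ln_n_ge1[OF n3])
    define Q where "Q = 4 * (G + B)\<^sup>2 * L + 1"
    define a where "a = real n powr (1/3)"
    define b where "b = C powr (1/3)"
    have np: "real n > 0" using n3 by simp
    have a3: "a ^ 3 = real n" and ap: "a > 0" using cube_root[OF np] by (auto simp: a_def)
    have b3: "b ^ 3 = C" and bp: "b > 0" and b2: "C powr (2/3) = b\<^sup>2"
      using cube_root[OF Cp] by (auto simp: b_def)
    define \<mu> where "\<mu> = a / b"
    have mup: "\<mu> > 0" using ap bp by (simp add: \<mu>_def)
    define r where "r t = (y t - flh_ogd B G init y t)\<^sup>2 - (y t - u t)\<^sup>2" for t
    have Q0: "Q \<ge> 0" using L1 by (simp add: Q_def)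
    have main: "(\<Sum>t=1..n. r t)
      \<le> Q * (1 + \<mu> * V u 1 n + 2 * (real n - real (1::nat) + 1) / \<mu>\<^sup>2) + 6 * lam * V u 1 n"
    proof (rule greedy[OF Q0 lam0 mup])
      fix a' b' assume "1 \<le> a'" "a' \<le> b'" "b' \<le> n" "real (Suc (b' - a')) * (V u a' b')\<^sup>2 \<le> 1"
      thus "(\<Sum>t=a'..b'. r t) \<le> Q + 6 * lam * V u a' b'"
        unfolding r_def Q_def L_def using interval_regret[OF B1 n3 yb ib ub K] by blast
    qed (use n3 in auto)
    have VC: "V u 1 n \<le> C" "V u 1 n \<ge> 0" using tvC tv_V[of n u] V_nonneg[of u 1 n] by auto
    define m where "m = a * b\<^sup>2"
    have m0: "m \<ge> 0" using ap bp by (simp add: m_def)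
    have muC: "\<mu> * C = m" unfolding \<mu>_def m_def using bp by (simp add: b3[symmetric] power2_eq_square power3_eq_cube)
    have nmu: "2 * (real n - real (1::nat) + 1) / \<mu>\<^sup>2 = 2 * m" unfolding \<mu>_def m_def
      using ap bp by (simp add: a3[symmetric] power2_eq_square power3_eq_cube field_simps)
    have lamC: "lam * C \<le> \<kappa> * m"
    proof -
      have "lam * C \<le> (\<kappa> * a / b) * C" using lamb Cp by (intro mult_right_mono) (auto simp: a_def b_def)
      also have "\<dots> = \<kappa> * m" unfolding m_def using bp
        by (simp add: b3[symmetric] power2_eq_square power3_eq_cube)
      finally show ?thesis .
    qed
    have "(\<Sum>t=1..n. r t) \<le> Q * (1 + \<mu> * C + 2 * m) + 6 * lam * C"
    proof -
      have "Q * (\<mu> * V u 1 n) \<le> Q * (\<mu> * C)"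
        using Q0 mup VC by (intro mult_left_mono) auto
      moreover have "lam * V u 1 n \<le> lam * C" using lam0 VC by (intro mult_left_mono) auto
      ultimately show ?thesis using main unfolding nmu by (simp add: algebra_simps)
    qed
    also have "\<dots> \<le> Q * (1 + 3 * m) + 6 * (\<kappa> * m)" using lamC muC by (simp add: algebra_simps)
    also have "\<dots> \<le> c * L * max m 1"
    proof -
      define M where "M = max m 1"
      have M1: "M \<ge> 1" "m \<le> M" by (auto simp: M_def)
      have QL: "Q \<le> q * L" using L1 by (simp add: Q_def q_def algebra_simps)
      have "Q * (1 + 3 * m) \<le> (q * L) * (1 + 3 * m)" using QL m0 by (intro mult_right_mono) auto
      also have "\<dots> \<le> (q * L) * (4 * M)" using qp L1 M1 by (intro mult_left_mono) auto
      finally have A1: "Q * (1 + 3 * m) \<le> 4 * q * L * M" by simp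
      have "m \<le> L * M" proof -
        have "1 * M \<le> L * M" using M1 L1 by (intro mult_right_mono) auto
        thus ?thesis using M1 by linarith
      qed
      hence A2: "6 * (\<kappa> * m) \<le> 6 * \<kappa> * L * M" using assms(3) by (simp add: algebra_simps)
      have "c * L * M = 4 * q * L * M + 6 * \<kappa> * L * M" by (simp add: c_def algebra_simps)
      thus ?thesis using A1 A2 by (simp add: M_def)
    qed
    finally show "(\<Sum>t = 1..n. (y t - flh_ogd B G init y t)\<^sup>2 - (y t - u t)\<^sup>2)
      \<le> c * ln (real n) * max (real n powr (1/3) * C powr (2/3)) 1"
      unfolding r_def L_def m_def a_def b2 b_def by simp
  qed
qed


end
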